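(* Let $(X,d)$ be a complete metric space with finite metric dimension, let $\mathcal{D}=\bigcup_j\mathcal{D}^j$, $\mathcal{D}^j=\{Q^j_k\}$, be a dyadic family in $X$ with parameter $\delta\in(0,1)$ and centers $x^j_k$, and let $\mu$ be a Borel measure on $X$ that is positive and finite on $d$-balls. Fix $j$ and set $T_j=\sum_k\mu(Q^j_k)\delta_{x^j_k}$. Fix a constant $C>0$ and a symmetric matrix $(H^j_{ki})$ with positive entries, and let $S_j=\sum_{k,i}w^j_{ki}\delta_{(x^j_k,x^j_i)}$ where $w^j_{ki}=H^j_{ki}(\mu(Q^j_k)+\mu(Q^j_i))$ if $k\neq i$ and $d(x^j_k,x^j_i)<C\delta^j$, and $w^j_{ki}=0$ otherwise. Then (1) for $\Phi\in\mathscr{C}_c(X\times X)$, $$Kir_j\Phi(x^j_k)=\frac1{\mu(Q^j_k)}\sum_{\{i\neq k:d(x^j_i,x^j_k)<C\delta^j\}}\Phi(x^j_k,x^j_i)(\mu(Q^j_k)+\mu(Q^j_i))H^j_{ki};$$ (2) for $f$ continuous and bounded on $X$, $$\Delta_jf(x^j_k)=\sum_{\{i:d(x^j_i,x^j_k)<C\delta^j\}}(f(x^j_i)-f(x^j_k))\Big(1+\frac{\mu(Q^j_i)}{\mu(Q^j_k)}\Big)H^j_{ki}.$$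
   Context: $(X,d)$ has finite metric (Assouad) dimension: there is $N$ such that no ball of radius $r$ contains more than $N$ points of any $r/2$-disperse set (a set $D$ is $\varepsilon$-disperse if $d(x,y)\ge\varepsilon$ for distinct $x,y\in D$). A dyadic family is a countable family $\mathcal{D}=\bigcup_{j\in\mathbb{Z}}\mathcal{D}^j$ of Borel sets for which there are $0<\delta<1$, $0<a<b$, $M\in\mathbb{N}$ and points $\{x^j_k\}$ such that: each $\mathcal{D}^j=\{Q^j_k\}$ is a disjoint partition of $X$; $B_d(x^j_k,a\delta^j)\subseteq Q^j_k\subseteq B_d(x^j_k,b\delta^j)$; each $Q^j_k$ is the disjoint union of at most $M$ sets of $\mathcal{D}^{j+1}$. $\delta_p$ is the unit point mass. With $\mathscr{S}_1=\mathscr{C}_c(X)$, $\mathscr{S}_2=\mathscr{C}_c(X\times X)$, $Kir_j\Phi$ is a function on $\{x^j_k\}$ with $\int\varphi\,Kir_j\Phi\,dT_j=\iint\varphi(x)\Phi(x,y)\,dS_j(x,y)$ for all $\varphi\in\mathscr{S}_1$, and $\Delta_jf=Kir_j(f(y)-f(x))$ with the same identity. *)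

theory Defs
  imports "HOL-Analysis.Analysis"
begin

definition finite_metric_dimension :: "'a::metric_space set \<Rightarrow> bool" where
  "finite_metric_dimension X \<longleftrightarrow>
     (\<exists>N::nat. \<forall>x\<in>X. \<forall>r>0. \<forall>E\<subseteq>X.
        (\<forall>p\<in>E. \<forall>q\<in>E. p \<noteq> q \<longrightarrow> dist p q \<ge> r / 2) \<longrightarrow>
        finite (E \<inter> ball x r) \<and> card (E \<inter> ball x r) \<le> N)"

text \<open>Dyadic family: level j is the partition D j of the space; c j Q is the centre of Q.\<close>
definition dyadic_family ::
  "real \<Rightarrow> real \<Rightarrow> real \<Rightarrow> nat \<Rightarrow> (int \<Rightarrow> 'a::metric_space set set) \<Rightarrow> (int \<Rightarrow> 'a set \<Rightarrow> 'a) \<Rightarrow> bool" where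
  "dyadic_family \<delta> a b M D c \<longleftrightarrow>
     0 < \<delta> \<and> \<delta> < 1 \<and> 0 < a \<and> a < b \<and>
     (\<forall>j. countable (D j) \<and> disjoint (D j) \<and> \<Union>(D j) = UNIV) \<and>
     (\<forall>j. \<forall>Q\<in>D j. Q \<in> sets borel \<and>
          ball (c j Q) (a * \<delta> powi j) \<subseteq> Q \<and> Q \<subseteq> ball (c j Q) (b * \<delta> powi j)) \<and>
     (\<forall>j. \<forall>Q\<in>D j. \<exists>F\<subseteq>D (j + 1). finite F \<and> card F \<le> M \<and> Q = \<Union>F)"

definition Cc :: "('a::metric_space \<Rightarrow> real) \<Rightarrow> bool" where
  "Cc \<phi> \<longleftrightarrow> continuous_on UNIV \<phi> \<and> compact (closure {x. \<phi> x \<noteq> 0})"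

definition dyad_weight ::
  "(int \<Rightarrow> 'a::metric_space set \<Rightarrow> 'a) \<Rightarrow> 'a measure \<Rightarrow> ('a set \<Rightarrow> 'a set \<Rightarrow> real) \<Rightarrow> real \<Rightarrow> real \<Rightarrow> int
     \<Rightarrow> 'a set \<Rightarrow> 'a set \<Rightarrow> real" where
  "dyad_weight c mu H C \<delta> j Q Q' =
     (if Q \<noteq> Q' \<and> dist (c j Q) (c j Q') < C * \<delta> powi j
      then H Q Q' * (measure mu Q + measure mu Q') else 0)"

text \<open>T_j = sum_k mu(Q^j_k) delta_{x^j_k}, as a measure (on all subsets).\<close>
definition T_meas ::
  "(int \<Rightarrow> 'a::metric_space set set) \<Rightarrow> (int \<Rightarrow> 'a set \<Rightarrow> 'a) \<Rightarrow> 'a measure \<Rightarrow> int \<Rightarrow> 'a measure" where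
  "T_meas D c mu j = density (count_space UNIV)
     (\<lambda>x. \<Sum>Q\<in>{Q\<in>D j. c j Q = x}. ennreal (measure mu Q))"

text \<open>S_j = sum_{k,i} w^j_{ki} delta_{(x^j_k,x^j_i)}, as a measure (on all subsets).\<close>
definition S_meas ::
  "(int \<Rightarrow> 'a::metric_space set set) \<Rightarrow> (int \<Rightarrow> 'a set \<Rightarrow> 'a) \<Rightarrow> 'a measure
     \<Rightarrow> ('a set \<Rightarrow> 'a set \<Rightarrow> real) \<Rightarrow> real \<Rightarrow> real \<Rightarrow> int \<Rightarrow> ('a \<times> 'a) measure" where
  "S_meas D c mu H C \<delta> j = density (count_space UNIV)
     (\<lambda>(x, y). \<Sum>(Q, Q')\<in>{(Q, Q'). Q \<in> D j \<and> Q' \<in> D j \<and> c j Q = x \<and> c j Q' = y}.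
         ennreal (dyad_weight c mu H C \<delta> j Q Q'))"

text \<open>g satisfies the defining identity of Kir_j Phi:
  int phi g dT = iint phi(x) Phi(x,y) dS for all phi in C_c(X).\<close>
definition kir_identity ::
  "'a::metric_space measure \<Rightarrow> ('a \<times> 'a) measure \<Rightarrow> ('a \<times> 'a \<Rightarrow> real) \<Rightarrow> ('a \<Rightarrow> real) \<Rightarrow> bool" where
  "kir_identity T S \<Phi> g \<longleftrightarrow>
     (\<forall>\<phi>. Cc \<phi> \<longrightarrow> (\<integral>x. \<phi> x * g x \<partial>T) = (\<integral>z. \<phi> (fst z) * \<Phi> z \<partial>S))"

end

theory Submission
  imports Defs
begin


definition disp :: "real \<Rightarrow> 'a::metric_space set \<Rightarrow> bool" where
  "disp e F \<longleftrightarrow> (\<forall>p\<in>F. \<forall>q\<in>F. p \<noteq> q \<longrightarrow> e \<le> dist p q)"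

lemma max_disp:
  fixes S :: "'a::metric_space set"
  assumes e: "0 < e" and B: "\<forall>F. F \<subseteq> S \<and> disp e F \<longrightarrow> finite F \<and> card F \<le> B"
  shows "\<exists>F. F \<subseteq> S \<and> disp e F \<and> finite F \<and> (\<forall>y\<in>S. \<exists>p\<in>F. dist y p < e)"
proof -
  define FF where "FF = {F. F \<subseteq> S \<and> disp e F}"
  have "card ` FF \<subseteq> {..B}" using B unfolding FF_def by auto
  hence fin: "finite (card ` FF)" by (rule finite_subset) simp
  have "{} \<in> FF" unfolding FF_def disp_def by auto
  hence ne: "card ` FF \<noteq> {}" by auto
  obtain F where F: "F \<in> FF" "card F = Max (card ` FF)"
    using Max_in[OF fin ne] by auto
  have Fs: "F \<subseteq> S" "disp e F" "finite F" using F(1) B unfolding FF_def by auto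
  have "\<forall>y\<in>S. \<exists>p\<in>F. dist y p < e"
  proof (rule ccontr)
    assume "\<not> ?thesis"
    then obtain y where y: "y \<in> S" "\<forall>p\<in>F. e \<le> dist y p" by (auto simp: not_less)
    have yF: "y \<notin> F" using y(2) e by fastforce
    have "insert y F \<in> FF" using Fs y unfolding FF_def disp_def
      by (auto simp: dist_commute)
    hence "card (insert y F) \<le> Max (card ` FF)" using fin by auto
    thus False using yF Fs(3) F(2) by simp
  qed
  with Fs show "\<exists>F. F \<subseteq> S \<and> disp e F \<and> finite F \<and> (\<forall>y\<in>S. \<exists>p\<in>F. dist y p < e)" by blast
qed

lemma fmd_card:
  assumes "finite_metric_dimension (UNIV :: 'a::metric_space set)"
  obtains N where "\<And>k x r E. 0 < r \<Longrightarrow> disp ((r/2)/2^k) (E::'a set) \<Longrightarrow>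
      finite (E \<inter> ball x r) \<and> card (E \<inter> ball x r) \<le> N^(k+1)"
proof -
  obtain N where N: "\<forall>x. \<forall>r>0. \<forall>E::'a set.
        (\<forall>p\<in>E. \<forall>q\<in>E. p \<noteq> q \<longrightarrow> dist p q \<ge> r / 2) \<longrightarrow>
        finite (E \<inter> ball x r) \<and> card (E \<inter> ball x r) \<le> N"
    using assms unfolding finite_metric_dimension_def by auto
  have "\<forall>x r E. 0 < r \<longrightarrow> disp ((r/2)/2^k) (E::'a set) \<longrightarrow>
      finite (E \<inter> ball x r) \<and> card (E \<inter> ball x r) \<le> N^(k+1)" for k
  proof (induction k)
    case 0
    then show ?case using N unfolding disp_def by simp
  next
    case (Suc k)
    show ?case
    proof (intro allI impI)
      fix x :: 'a and r and E :: "'a set"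
      assume r: "0 < r" and dE: "disp ((r/2)/2^Suc k) E"
      have "\<forall>F. F \<subseteq> ball x r \<and> disp (r/2) F \<longrightarrow> finite F \<and> card F \<le> N"
      proof (intro allI impI)
        fix F assume "F \<subseteq> ball x r \<and> disp (r/2) F"
        then show "finite F \<and> card F \<le> N" using N[rule_format, OF r, of F x]
          unfolding disp_def by (simp add: Int_absorb2)
      qed
      then obtain F where F: "F \<subseteq> ball x r" "disp (r/2) F" "finite F"
          "\<forall>y\<in>ball x r. \<exists>p\<in>F. dist y p < r/2"
        using max_disp[where e="r/2" and S="ball x r" and B=N] r by auto
      have cF: "card F \<le> N" using N[rule_format, OF r, of F x] F unfolding disp_def
        by (simp add: Int_absorb2)
      have sub: "E \<inter> ball x r \<subseteq> (\<Union>p\<in>F. E \<inter> ball p (r/2))"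
      proof
        fix y assume y: "y \<in> E \<inter> ball x r"
        then obtain p where "p \<in> F" "dist y p < r/2" using F(4) by blast
        thus "y \<in> (\<Union>p\<in>F. E \<inter> ball p (r/2))" using y by (auto simp: dist_commute)
      qed
      have each: "finite (E \<inter> ball p (r/2)) \<and> card (E \<inter> ball p (r/2)) \<le> N^(k+1)" for p
        using Suc.IH[rule_format, of "r/2" E p] r dE by (simp add: field_simps)
      have finU: "finite (\<Union>p\<in>F. E \<inter> ball p (r/2))" using each by (intro finite_UN_I[OF F(3)]) blast
      have "card (E \<inter> ball x r) \<le> card (\<Union>p\<in>F. E \<inter> ball p (r/2))"
        using card_mono[OF finU sub] .
      also have "\<dots> \<le> (\<Sum>p\<in>F. card (E \<inter> ball p (r/2)))" using card_UN_le[OF F(3)] .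
      also have "\<dots> \<le> card F * N^(k+1)" using sum_bounded_above[of F "\<lambda>p. card (E \<inter> ball p (r/2))" "N^(k+1)"] each by auto
      also have "\<dots> \<le> N * N^(k+1)" using cF by simp
      finally show "finite (E \<inter> ball x r) \<and> card (E \<inter> ball x r) \<le> N^(Suc k+1)"
        using finite_subset[OF sub finU] by simp
    qed
  qed
  thus ?thesis using that by blast
qed

lemma fmd_bound:
  assumes "finite_metric_dimension (UNIV :: 'a::metric_space set)" and e: "0 < e"
  shows "\<exists>B. \<forall>E::'a set. disp e E \<longrightarrow> finite (E \<inter> ball x r) \<and> card (E \<inter> ball x r) \<le> B"
proof (cases "0 < r")
  case False
  then show ?thesis by (intro exI[of _ 0]) (simp add: ball_empty not_less)
next
  case r: True
  obtain N where N: "\<And>k x r E. 0 < r \<Longrightarrow> disp ((r/2)/2^k) (E::'a set) \<Longrightarrow>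
      finite (E \<inter> ball x r) \<and> card (E \<inter> ball x r) \<le> N^(k+1)"
    using fmd_card[OF assms(1)] by blast
  obtain k where k: "r / (2*e) < 2^k" using real_arch_pow[of 2 "r/(2*e)"] by auto
  have le: "(r/2)/2^k \<le> e" using k e by (simp add: field_simps)
  show ?thesis
  proof (intro exI[of _ "N^(k+1)"] allI impI)
    fix E :: "'a set" assume "disp e E"
    hence "disp ((r/2)/2^k) E" using le unfolding disp_def by (meson order_trans)
    thus "finite (E \<inter> ball x r) \<and> card (E \<inter> ball x r) \<le> N^(k+1)" using N r by blast
  qed
qed

lemma fmd_compact_cball:
  assumes "finite_metric_dimension (UNIV :: 'a::{metric_space,complete_space} set)"
  shows "compact (cball (x::'a) r)"
  unfolding compact_eq_totally_bounded
proof (intro conjI allI impI)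
  show "complete (cball x r)" by (rule complete_eq_closed[THEN iffD2, OF closed_cball])
  fix e :: real assume e: "0 < e"
  obtain B where B: "\<forall>E::'a set. disp e E \<longrightarrow> finite (E \<inter> ball x (r+1)) \<and> card (E \<inter> ball x (r+1)) \<le> B"
    using fmd_bound[OF assms e] by blast
  have Bb: "\<forall>F. F \<subseteq> ball x (r+1) \<and> disp e F \<longrightarrow> finite F \<and> card F \<le> B"
  proof (intro allI impI)
    fix F :: "'a set" assume "F \<subseteq> ball x (r+1) \<and> disp e F"
    thus "finite F \<and> card F \<le> B" using B[rule_format, of F] by (simp add: Int_absorb2)
  qed
  obtain F where F: "finite F" "\<forall>y\<in>ball x (r+1). \<exists>p\<in>F. dist y p < e"
    using max_disp[OF e Bb] by (elim exE conjE) blast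
  show "\<exists>k. finite k \<and> cball x r \<subseteq> (\<Union>x\<in>k. ball x e)"
  proof (intro exI[of _ F] conjI F(1) subsetI)
    fix y assume y: "y \<in> cball x r"
    hence "y \<in> ball x (r+1)" by simp
    then obtain p where "p \<in> F" "dist y p < e" using F(2) by blast
    thus "y \<in> (\<Union>x\<in>F. ball x e)" by (auto simp: dist_commute)
  qed
qed



lemma integral_dens:
  fixes e :: "'i \<Rightarrow> 'b" and m :: "'i \<Rightarrow> real" and h :: "'b \<Rightarrow> real"
  assumes inj: "inj_on e I" and m: "\<forall>i\<in>I. 0 \<le> m i" and J: "finite J" "J \<subseteq> I"
    and z: "\<forall>i\<in>I. i \<notin> J \<longrightarrow> m i * h (e i) = 0"
  shows "(\<integral>x. h x \<partial>density (count_space UNIV) (\<lambda>x. \<Sum>i\<in>{i\<in>I. e i = x}. ennreal (m i)))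
     = (\<Sum>i\<in>J. m i * h (e i))"
proof -
  define w where "w x = (\<Sum>i\<in>{i\<in>I. e i = x}. m i)" for x
  have dens: "(\<lambda>x. \<Sum>i\<in>{i\<in>I. e i = x}. ennreal (m i)) = (\<lambda>x. ennreal (w x))"
    using m by (intro ext) (auto simp: w_def intro!: sum_ennreal)
  have w0: "0 \<le> w x" for x using m unfolding w_def by (intro sum_nonneg) auto
  have we: "w (e i) = m i" if "i \<in> I" for i
  proof -
    have "{i'\<in>I. e i' = e i} = {i}" using inj that by (auto dest: inj_onD)
    thus ?thesis unfolding w_def by simp
  qed
  have wn: "w x = 0" if "x \<notin> e ` I" for x
  proof -
    have "{i'\<in>I. e i' = x} = {}" using that by auto
    thus ?thesis unfolding w_def by (simp only: sum.empty)
  qed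
  have supp: "{x \<in> UNIV. w x * h x \<noteq> 0} \<subseteq> e ` J"
  proof
    fix x assume x: "x \<in> {x \<in> UNIV. w x * h x \<noteq> 0}"
    hence "x \<in> e ` I" using wn by force
    then obtain i where i: "i \<in> I" "x = e i" by auto
    hence "m i * h (e i) \<noteq> 0" using x we by auto
    hence "i \<in> J" using z i by auto
    thus "x \<in> e ` J" using i by auto
  qed
  have "(\<integral>x. h x \<partial>density (count_space UNIV) (\<lambda>x. \<Sum>i\<in>{i\<in>I. e i = x}. ennreal (m i)))
      = (\<integral>x. w x *\<^sub>R h x \<partial>count_space UNIV)"
    unfolding dens by (rule integral_density) (auto simp: w0)
  also have "\<dots> = (\<Sum>x | x \<in> UNIV \<and> w x * h x \<noteq> 0. w x * h x)"
    using lebesgue_integral_count_space_finite_support[of UNIV "\<lambda>x. w x * h x"]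
      finite_subset[OF supp finite_imageI[OF J(1)]] by simp
  also have "\<dots> = (\<Sum>x\<in>e ` J. w x * h x)"
    using supp J(1) by (intro sum.mono_neutral_left) auto
  also have "\<dots> = (\<Sum>i\<in>J. w (e i) * h (e i))"
    using inj_on_subset[OF inj J(2)] by (simp add: sum.reindex)
  also have "\<dots> = (\<Sum>i\<in>J. m i * h (e i))"
    using J(2) we by (intro sum.cong) auto
  finally show ?thesis .
qed

locale ppsetup =
  fixes mu :: "'a::complete_space measure"
    and D :: "int \<Rightarrow> 'a set set" and c :: "int \<Rightarrow> 'a set \<Rightarrow> 'a"
    and \<delta> a b :: real and M :: nat and j :: int and C :: real
    and H :: "'a set \<Rightarrow> 'a set \<Rightarrow> real"
  assumes fmd: "finite_metric_dimension (UNIV :: 'a set)"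
    and dy: "dyadic_family \<delta> a b M D c"
    and sm: "sets mu = sets borel"
    and bm: "\<forall>x r. 0 < r \<longrightarrow> 0 < emeasure mu (ball x r) \<and> emeasure mu (ball x r) < \<infinity>"
    and Cp: "0 < C"
    and Hp: "\<forall>Q\<in>D j. \<forall>Q'\<in>D j. H Q Q' = H Q' Q \<and> 0 < H Q Q'"
begin

lemma dpos: "0 < \<delta> powi j" using dy unfolding dyadic_family_def by simp
lemma apos: "0 < a" using dy unfolding dyadic_family_def by simp
lemma bpos: "0 < b" using dy unfolding dyadic_family_def by simp

lemma ball_sub: "Q \<in> D j \<Longrightarrow> ball (c j Q) (a * \<delta> powi j) \<subseteq> Q"
  using dy unfolding dyadic_family_def by blast
lemma sub_ball: "Q \<in> D j \<Longrightarrow> Q \<subseteq> ball (c j Q) (b * \<delta> powi j)"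
  using dy unfolding dyadic_family_def by blast
lemma Qborel: "Q \<in> D j \<Longrightarrow> Q \<in> sets borel"
  using dy unfolding dyadic_family_def by blast

lemma cin: "Q \<in> D j \<Longrightarrow> c j Q \<in> Q"
  using ball_sub[of Q] apos dpos by (meson centre_in_ball mult_pos_pos subsetD)

lemma disj: "Q \<in> D j \<Longrightarrow> Q' \<in> D j \<Longrightarrow> Q \<noteq> Q' \<Longrightarrow> Q \<inter> Q' = {}"
  using dy unfolding dyadic_family_def disjoint_def disjnt_def by blast

lemma inj: "inj_on (c j) (D j)"
proof (rule inj_onI)
  fix Q Q' assume "Q \<in> D j" "Q' \<in> D j" "c j Q = c j Q'"
  thus "Q = Q'" using cin[of Q] cin[of Q'] disj[of Q Q'] by auto
qed

lemma sep: "Q \<in> D j \<Longrightarrow> Q' \<in> D j \<Longrightarrow> Q \<noteq> Q' \<Longrightarrow> a * \<delta> powi j \<le> dist (c j Q) (c j Q')"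
proof (rule ccontr)
  assume *: "Q \<in> D j" "Q' \<in> D j" "Q \<noteq> Q'" "\<not> a * \<delta> powi j \<le> dist (c j Q) (c j Q')"
  hence "c j Q' \<in> Q" using ball_sub[of Q] by (auto simp: not_le)
  thus False using cin[of Q'] disj[of Q Q'] * by auto
qed

lemma meas_pos: "Q \<in> D j \<Longrightarrow> 0 < measure mu Q"
proof -
  assume Q: "Q \<in> D j"
  have Qs: "Q \<in> sets mu" using Qborel[OF Q] sm by simp
  have r1: "0 < a * \<delta> powi j" "0 < b * \<delta> powi j" using apos bpos dpos by auto
  have bs: "ball (c j Q) (a * \<delta> powi j) \<in> sets mu" using sm by simp
  have bs2: "ball (c j Q) (b * \<delta> powi j) \<in> sets mu" using sm by simp
  have "emeasure mu Q \<le> emeasure mu (ball (c j Q) (b * \<delta> powi j))"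
    by (rule emeasure_mono[OF sub_ball[OF Q] bs2])
  also have "\<dots> < \<infinity>" using bm r1 by blast
  finally have fin: "emeasure mu Q \<noteq> top" by simp
  have "0 < emeasure mu (ball (c j Q) (a * \<delta> powi j))" using bm r1 by blast
  also have "\<dots> \<le> emeasure mu Q" by (rule emeasure_mono[OF ball_sub[OF Q] Qs])
  finally have "0 < emeasure mu Q" .
  thus ?thesis using emeasure_eq_ennreal_measure[OF fin] by simp
qed

lemma fin_near: "finite {Q\<in>D j. dist (c j Q) x < r}"
proof -
  have e: "0 < a * \<delta> powi j" using apos dpos by simp
  have "disp (a * \<delta> powi j) (c j ` D j)" unfolding disp_def using sep by auto
  then have f: "finite (c j ` D j \<inter> ball x r)" using fmd_bound[OF fmd e, of x r] by blast
  have "c j ` {Q\<in>D j. dist (c j Q) x < r} \<subseteq> c j ` D j \<inter> ball x r" by (auto simp: dist_commute)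
  hence "finite (c j ` {Q\<in>D j. dist (c j Q) x < r})" using f finite_subset by blast
  thus ?thesis by (rule finite_imageD) (rule inj_on_subset[OF inj], auto)
qed

lemma fin_supp:
  assumes "Cc \<phi>" shows "finite {Q\<in>D j. \<phi> (c j Q) \<noteq> 0}"
proof -
  have "bounded (closure {x. \<phi> x \<noteq> 0})" using assms unfolding Cc_def by (simp add: compact_imp_bounded)
  then obtain r where r: "closure {x. \<phi> x \<noteq> 0} \<subseteq> ball undefined r" using bounded_subset_ballD by blast
  have "{Q\<in>D j. \<phi> (c j Q) \<noteq> 0} \<subseteq> {Q\<in>D j. dist (c j Q) undefined < r}"
  proof
    fix Q assume Q: "Q \<in> {Q\<in>D j. \<phi> (c j Q) \<noteq> 0}"
    hence "c j Q \<in> closure {x. \<phi> x \<noteq> 0}" using closure_subset[of "{x. \<phi> x \<noteq> 0}"] by blast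
    hence "c j Q \<in> ball undefined r" using r by blast
    thus "Q \<in> {Q\<in>D j. dist (c j Q) undefined < r}" using Q by (simp add: dist_commute)
  qed
  thus ?thesis using fin_near finite_subset by blast
qed

lemma bump:
  assumes Q: "Q \<in> D j"
  shows "\<exists>\<phi>. Cc \<phi> \<and> \<phi> (c j Q) = 1 \<and> (\<forall>Q'\<in>D j. Q' \<noteq> Q \<longrightarrow> \<phi> (c j Q') = 0)"
proof -
  define \<epsilon> where "\<epsilon> = a * \<delta> powi j"
  have e: "0 < \<epsilon>" using apos dpos by (simp add: \<epsilon>_def)
  define \<phi> where "\<phi> x = max 0 (1 - dist x (c j Q) / \<epsilon>)" for x
  have cont: "continuous_on UNIV \<phi>" unfolding \<phi>_def by (intro continuous_intros) (use e in auto)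
  have "{x. \<phi> x \<noteq> 0} \<subseteq> cball (c j Q) \<epsilon>"
  proof
    fix x assume "x \<in> {x. \<phi> x \<noteq> 0}"
    hence "\<phi> x \<noteq> 0" by simp
    hence "0 < 1 - dist x (c j Q) / \<epsilon>" unfolding \<phi>_def by (metis max.absorb1 not_le)
    hence "dist x (c j Q) < \<epsilon>" using e by (simp add: field_simps)
    thus "x \<in> cball (c j Q) \<epsilon>" by (simp add: dist_commute)
  qed
  hence "closure {x. \<phi> x \<noteq> 0} \<subseteq> cball (c j Q) \<epsilon>" by (simp add: closure_minimal)
  hence eq: "closure {x. \<phi> x \<noteq> 0} \<inter> cball (c j Q) \<epsilon> = closure {x. \<phi> x \<noteq> 0}" by blast
  have "compact (closure {x. \<phi> x \<noteq> 0} \<inter> cball (c j Q) \<epsilon>)"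
    by (rule closed_Int_compact[OF closed_closure fmd_compact_cball[OF fmd]])
  hence "compact (closure {x. \<phi> x \<noteq> 0})" unfolding eq .
  hence "Cc \<phi>" using cont unfolding Cc_def by simp
  moreover have "\<phi> (c j Q) = 1" by (simp add: \<phi>_def)
  moreover have "\<phi> (c j Q') = 0" if "Q' \<in> D j" "Q' \<noteq> Q" for Q'
  proof -
    have "\<epsilon> \<le> dist (c j Q') (c j Q)" using sep[OF that(1) Q that(2)] by (simp add: \<epsilon>_def)
    thus ?thesis using e by (simp add: \<phi>_def field_simps)
  qed
  ultimately show ?thesis by blast
qed

definition Nb where "Nb Q = {Q'\<in>D j. Q' \<noteq> Q \<and> dist (c j Q') (c j Q) < C * \<delta> powi j}"

lemma fin_Nb: "finite (Nb Q)"
  unfolding Nb_def by (rule finite_subset[OF _ fin_near[of "c j Q" "C * \<delta> powi j"]]) auto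

lemma dw_Nb: "Q \<in> D j \<Longrightarrow> Q' \<in> Nb Q \<Longrightarrow> dyad_weight c mu H C \<delta> j Q Q' = H Q Q' * (measure mu Q + measure mu Q')"
  unfolding Nb_def dyad_weight_def by (auto simp: dist_commute)

lemma dw_not_Nb: "Q \<in> D j \<Longrightarrow> Q' \<notin> Nb Q \<Longrightarrow> Q' \<in> D j \<Longrightarrow> dyad_weight c mu H C \<delta> j Q Q' = 0"
  unfolding Nb_def dyad_weight_def by (auto simp: dist_commute)

lemma dw_nonneg: "Q \<in> D j \<Longrightarrow> Q' \<in> D j \<Longrightarrow> 0 \<le> dyad_weight c mu H C \<delta> j Q Q'"
proof -
  assume "Q \<in> D j" "Q' \<in> D j"
  hence "0 < H Q Q'" using Hp by blast
  thus ?thesis unfolding dyad_weight_def by simp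
qed

lemma T_int:
  assumes J: "finite J" "J \<subseteq> D j" and z: "\<forall>Q\<in>D j. Q \<notin> J \<longrightarrow> \<phi> (c j Q) = 0"
  shows "(\<integral>x. \<phi> x * g x \<partial>T_meas D c mu j) = (\<Sum>Q\<in>J. measure mu Q * (\<phi> (c j Q) * g (c j Q)))"
  unfolding T_meas_def
  by (rule integral_dens[OF inj _ J]) (use z in auto)

lemma S_int:
  assumes J: "finite J" "J \<subseteq> D j" and z: "\<forall>Q\<in>D j. Q \<notin> J \<longrightarrow> \<phi> (c j Q) = 0"
  shows "(\<integral>z. \<phi> (fst z) * \<Phi> z \<partial>S_meas D c mu H C \<delta> j) =
     (\<Sum>Q\<in>J. \<Sum>Q'\<in>Nb Q. dyad_weight c mu H C \<delta> j Q Q' * (\<phi> (c j Q) * \<Phi> (c j Q, c j Q')))"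
proof -
  define pm where "pm = (\<lambda>(Q, Q'). (c j Q, c j Q'))"
  define dwp where "dwp = (\<lambda>(Q, Q'). dyad_weight c mu H C \<delta> j Q Q')"
  have Seq: "S_meas D c mu H C \<delta> j = density (count_space UNIV)
     (\<lambda>z. \<Sum>i\<in>{i\<in>D j \<times> D j. pm i = z}. ennreal (dwp i))"
  proof -
    have "(\<lambda>(x, y). \<Sum>(Q, Q')\<in>{(Q, Q'). Q \<in> D j \<and> Q' \<in> D j \<and> c j Q = x \<and> c j Q' = y}.
         ennreal (dyad_weight c mu H C \<delta> j Q Q')) =
        (\<lambda>z. \<Sum>i\<in>{i\<in>D j \<times> D j. pm i = z}. ennreal (dwp i))"
    proof (rule ext, clarify)
      fix x y
      have "{(Q, Q'). Q \<in> D j \<and> Q' \<in> D j \<and> c j Q = x \<and> c j Q' = y} = {i\<in>D j \<times> D j. pm i = (x, y)}"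
        by (auto simp: pm_def)
      thus "(\<Sum>(Q, Q')\<in>{(Q, Q'). Q \<in> D j \<and> Q' \<in> D j \<and> c j Q = x \<and> c j Q' = y}.
         ennreal (dyad_weight c mu H C \<delta> j Q Q')) = (\<Sum>i\<in>{i\<in>D j \<times> D j. pm i = (x, y)}. ennreal (dwp i))"
        by (auto simp: dwp_def split_beta intro!: sum.cong)
    qed
    thus ?thesis unfolding S_meas_def by simp
  qed
  have injp: "inj_on pm (D j \<times> D j)" using inj unfolding pm_def by (auto simp: inj_on_def)
  have finS: "finite (SIGMA Q:J. Nb Q)" using J(1) fin_Nb by auto
  have subS: "(SIGMA Q:J. Nb Q) \<subseteq> D j \<times> D j" using J(2) by (auto simp: Nb_def)
  have "(\<integral>z. \<phi> (fst z) * \<Phi> z \<partial>S_meas D c mu H C \<delta> j) =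
      (\<Sum>i\<in>(SIGMA Q:J. Nb Q). dwp i * (\<phi> (fst (pm i)) * \<Phi> (pm i)))"
    unfolding Seq
  proof (rule integral_dens[OF injp _ finS subS])
    show "\<forall>i\<in>D j \<times> D j. 0 \<le> dwp i" by (auto simp: dwp_def intro: dw_nonneg)
    show "\<forall>i\<in>D j \<times> D j. i \<notin> (SIGMA Q:J. Nb Q) \<longrightarrow> dwp i * (\<phi> (fst (pm i)) * \<Phi> (pm i)) = 0"
      using z dw_not_Nb by (auto simp: dwp_def pm_def)
  qed
  also have "\<dots> = (\<Sum>Q\<in>J. \<Sum>Q'\<in>Nb Q. dyad_weight c mu H C \<delta> j Q Q' * (\<phi> (c j Q) * \<Phi> (c j Q, c j Q')))"
    by (subst sum.Sigma[OF J(1)]) (auto simp: fin_Nb dwp_def pm_def split_beta)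
  finally show ?thesis .
qed

definition F where "F \<Phi> Q = (1 / measure mu Q) *
   (\<Sum>Q'\<in>{Q'\<in>D j. Q' \<noteq> Q \<and> dist (c j Q') (c j Q) < C * \<delta> powi j}.
       \<Phi> (c j Q, c j Q') * (measure mu Q + measure mu Q') * H Q Q')"

lemma F_alt: "Q \<in> D j \<Longrightarrow> measure mu Q * F \<Phi> Q =
   (\<Sum>Q'\<in>Nb Q. dyad_weight c mu H C \<delta> j Q Q' * \<Phi> (c j Q, c j Q'))"
  using meas_pos[of Q] unfolding F_def Nb_def[symmetric]
  by (auto intro!: sum.cong simp: dw_Nb mult_ac)

lemma kir_exists: "kir_identity (T_meas D c mu j) (S_meas D c mu H C \<delta> j) \<Phi> (\<lambda>x. F \<Phi> (inv_into (D j) (c j) x))"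
  unfolding kir_identity_def
proof (intro allI impI)
  fix \<phi> :: "'a \<Rightarrow> real" assume "Cc \<phi>"
  define J where "J = {Q\<in>D j. \<phi> (c j Q) \<noteq> 0}"
  have J: "finite J" "J \<subseteq> D j" "\<forall>Q\<in>D j. Q \<notin> J \<longrightarrow> \<phi> (c j Q) = 0"
    using fin_supp[OF \<open>Cc \<phi>\<close>] by (auto simp: J_def)
  have "(\<integral>x. \<phi> x * F \<Phi> (inv_into (D j) (c j) x) \<partial>T_meas D c mu j)
      = (\<Sum>Q\<in>J. measure mu Q * (\<phi> (c j Q) * F \<Phi> (inv_into (D j) (c j) (c j Q))))"
    by (rule T_int[OF J])
  also have "\<dots> = (\<Sum>Q\<in>J. \<phi> (c j Q) * (measure mu Q * F \<Phi> Q))"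
    using J(2) by (intro sum.cong) (auto simp: inv_into_f_f[OF inj])
  also have "\<dots> = (\<Sum>Q\<in>J. \<Sum>Q'\<in>Nb Q. dyad_weight c mu H C \<delta> j Q Q' * (\<phi> (c j Q) * \<Phi> (c j Q, c j Q')))"
    using J(2) by (intro sum.cong refl) (simp add: F_alt subset_iff sum_distrib_left mult.left_commute)
  also have "\<dots> = (\<integral>z. \<phi> (fst z) * \<Phi> z \<partial>S_meas D c mu H C \<delta> j)"
    by (rule S_int[OF J, symmetric])
  finally show "(\<integral>x. \<phi> x * F \<Phi> (inv_into (D j) (c j) x) \<partial>T_meas D c mu j) =
      (\<integral>z. \<phi> (fst z) * \<Phi> z \<partial>S_meas D c mu H C \<delta> j)" .
qed

lemma kir_unique:
  assumes g: "kir_identity (T_meas D c mu j) (S_meas D c mu H C \<delta> j) \<Phi> g" and Q: "Q \<in> D j"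
  shows "g (c j Q) = F \<Phi> Q"
proof -
  obtain \<phi> where \<phi>: "Cc \<phi>" "\<phi> (c j Q) = 1" "\<forall>Q'\<in>D j. Q' \<noteq> Q \<longrightarrow> \<phi> (c j Q') = 0"
    using bump[OF Q] by blast
  have J: "finite {Q}" "{Q} \<subseteq> D j" "\<forall>Q'\<in>D j. Q' \<notin> {Q} \<longrightarrow> \<phi> (c j Q') = 0"
    using Q \<phi>(3) by auto
  have "measure mu Q * g (c j Q) = (\<integral>x. \<phi> x * g x \<partial>T_meas D c mu j)"
    using T_int[OF J, of g] \<phi>(2) by simp
  also have "\<dots> = (\<integral>z. \<phi> (fst z) * \<Phi> z \<partial>S_meas D c mu H C \<delta> j)"
  proof -
    have "\<forall>\<phi>. Cc \<phi> \<longrightarrow> (\<integral>x. \<phi> x * g x \<partial>T_meas D c mu j) = (\<integral>z. \<phi> (fst z) * \<Phi> z \<partial>S_meas D c mu H C \<delta> j)"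
      using g unfolding kir_identity_def .
    from this[rule_format, OF \<phi>(1)] show ?thesis .
  qed
  also have "\<dots> = measure mu Q * F \<Phi> Q"
    using S_int[OF J, of \<Phi>] \<phi>(2) F_alt[OF Q] by simp
  finally show ?thesis using meas_pos[OF Q] by simp
qed


lemma F_f:
  assumes Q: "Q \<in> D j"
  shows "F (\<lambda>(x, y). f y - f x) Q =
    (\<Sum>Q'\<in>{Q'\<in>D j. dist (c j Q') (c j Q) < C * \<delta> powi j}.
       (f (c j Q') - f (c j Q)) * (1 + measure mu Q' / measure mu Q) * H Q Q')"
proof -
  have m: "0 < measure mu Q" using meas_pos[OF Q] .
  have A: "{Q'\<in>D j. dist (c j Q') (c j Q) < C * \<delta> powi j} = insert Q (Nb Q)"
    using Q Cp dpos unfolding Nb_def by auto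
  have nQ: "Q \<notin> Nb Q" unfolding Nb_def by simp
  have "(\<Sum>Q'\<in>{Q'\<in>D j. dist (c j Q') (c j Q) < C * \<delta> powi j}.
       (f (c j Q') - f (c j Q)) * (1 + measure mu Q' / measure mu Q) * H Q Q')
      = (\<Sum>Q'\<in>Nb Q. (f (c j Q') - f (c j Q)) * (1 + measure mu Q' / measure mu Q) * H Q Q')"
    unfolding A using fin_Nb nQ by simp
  also have "\<dots> = (\<Sum>Q'\<in>Nb Q. (1 / measure mu Q) * ((f (c j Q') - f (c j Q)) * (measure mu Q + measure mu Q') * H Q Q'))"
    using m by (intro sum.cong refl) (simp add: field_simps)
  also have "\<dots> = F (\<lambda>(x, y). f y - f x) Q"
    unfolding F_def Nb_def[symmetric] by (simp add: sum_distrib_left)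
  finally show ?thesis by simp
qed

end


theorem proposition3p3:
  fixes mu :: "'a::complete_space measure"
    and D :: "int \<Rightarrow> 'a set set" and c :: "int \<Rightarrow> 'a set \<Rightarrow> 'a"
    and \<delta> a b :: real and M :: nat and j :: int and C :: real
    and H :: "'a set \<Rightarrow> 'a set \<Rightarrow> real"
  assumes "finite_metric_dimension (UNIV :: 'a set)"
    and "dyadic_family \<delta> a b M D c"
    and "sets mu = sets borel"
    and "\<forall>x r. 0 < r \<longrightarrow> 0 < emeasure mu (ball x r) \<and> emeasure mu (ball x r) < \<infinity>"
    and "0 < C"
    and "\<forall>Q\<in>D j. \<forall>Q'\<in>D j. H Q Q' = H Q' Q \<and> 0 < H Q Q'"
  shows
    "(\<forall>\<Phi> :: 'a \<times> 'a \<Rightarrow> real. Cc \<Phi> \<longrightarrow>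
       (\<exists>g. kir_identity (T_meas D c mu j) (S_meas D c mu H C \<delta> j) \<Phi> g) \<and>
       (\<forall>g. kir_identity (T_meas D c mu j) (S_meas D c mu H C \<delta> j) \<Phi> g \<longrightarrow>
          (\<forall>Q\<in>D j. g (c j Q) =
             (1 / measure mu Q) *
             (\<Sum>Q'\<in>{Q'\<in>D j. Q' \<noteq> Q \<and> dist (c j Q') (c j Q) < C * \<delta> powi j}.
                \<Phi> (c j Q, c j Q') * (measure mu Q + measure mu Q') * H Q Q')))) \<and>
     (\<forall>f :: 'a \<Rightarrow> real. continuous_on UNIV f \<and> bounded (range f) \<longrightarrow>
       (\<exists>g. kir_identity (T_meas D c mu j) (S_meas D c mu H C \<delta> j) (\<lambda>(x, y). f y - f x) g) \<and>
       (\<forall>g. kir_identity (T_meas D c mu j) (S_meas D c mu H C \<delta> j) (\<lambda>(x, y). f y - f x) g \<longrightarrow>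
          (\<forall>Q\<in>D j. g (c j Q) =
             (\<Sum>Q'\<in>{Q'\<in>D j. dist (c j Q') (c j Q) < C * \<delta> powi j}.
                (f (c j Q') - f (c j Q)) * (1 + measure mu Q' / measure mu Q) * H Q Q'))))"
  proof -
  interpret ppsetup mu D c \<delta> a b M j C H
    by (unfold_locales) (rule assms)+
  show ?thesis
  proof (intro conjI allI impI)
    fix \<Phi> :: "'a \<times> 'a \<Rightarrow> real" assume "Cc \<Phi>"
    show "\<exists>g. kir_identity (T_meas D c mu j) (S_meas D c mu H C \<delta> j) \<Phi> g"
      using kir_exists by blast
    fix g assume g: "kir_identity (T_meas D c mu j) (S_meas D c mu H C \<delta> j) \<Phi> g"
    show "\<forall>Q\<in>D j. g (c j Q) =
             (1 / measure mu Q) *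
             (\<Sum>Q'\<in>{Q'\<in>D j. Q' \<noteq> Q \<and> dist (c j Q') (c j Q) < C * \<delta> powi j}.
                \<Phi> (c j Q, c j Q') * (measure mu Q + measure mu Q') * H Q Q')"
      using kir_unique[OF g] unfolding F_def by blast
  next
    fix f :: "'a \<Rightarrow> real" assume "continuous_on UNIV f \<and> bounded (range f)"
    show "\<exists>g. kir_identity (T_meas D c mu j) (S_meas D c mu H C \<delta> j) (\<lambda>(x, y). f y - f x) g"
      using kir_exists by blast
    fix g assume g: "kir_identity (T_meas D c mu j) (S_meas D c mu H C \<delta> j) (\<lambda>(x, y). f y - f x) g"
    show "\<forall>Q\<in>D j. g (c j Q) =
             (\<Sum>Q'\<in>{Q'\<in>D j. dist (c j Q') (c j Q) < C * \<delta> powi j}.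
                (f (c j Q') - f (c j Q)) * (1 + measure mu Q' / measure mu Q) * H Q Q')"
      using kir_unique[OF g] F_f by simp
  qed
qed

end
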